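(* Let $\Omega=\{z\in\mathbb{C}:|z|=1\}$, $\psi\in\mathbb{C}$ with $|\psi|<1$, and let $(Z_U,Z_V)$ be a random vector on $\Omega\times\Omega$ with density $$c(z_u,z_v)=\frac{1}{4\pi^2}\,\frac{1-|\psi|^2}{|1-\psi z_v\overline{z_u}|^2},\qquad z_u,z_v\in\Omega.$$ Let $g_1,g_2$ be one-to-one mappings defined on $\Omega$ and differentiable on $\Omega$. Then $g_1(Z_U)$ and $g_2(Z_V)$ are independent if and only if $\psi=0$.
   Context: The density is with respect to arc-length measure on each circle. This distribution is denoted $BC_+(\psi)$. *)

theory Defs
  imports "HOL-Probability.Probability"
begin

definition unit_circle :: "complex set" where
  "unit_circle = {z. cmod z = 1}"

definition arc_measure :: "complex measure" where
  "arc_measure = distr (restrict_space lborel {0..<2*pi}) borel cis"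

text \<open>The density of BC+(psi) w.r.t. arc-length on each circle.\<close>
definition bc_density :: "complex \<Rightarrow> complex \<Rightarrow> complex \<Rightarrow> real" where
  "bc_density \<psi> zu zv =
     (1 / (4 * pi^2)) * (1 - (cmod \<psi>)^2) / (cmod (1 - \<psi> * zv * cnj zu))^2"

end

theory Submission
  imports Defs "HOL-Complex_Analysis.Complex_Analysis"
begin

lemma alg: "(P::complex) \<noteq> 0 \<Longrightarrow> Q \<noteq> 0 \<Longrightarrow> z \<noteq> 0 \<Longrightarrow> C / P / (z*Q) * 1 * \<i> * z = \<i> * (C/(P*Q))"
  by (simp add: field_simps)

lemma poisson_hk:
  fixes a :: complex assumes a: "cmod a < 1"
  shows "((\<lambda>t. (1 - (cmod a)^2) / (cmod (1 - a * cis t))^2) has_integral 2*pi) {0..2*pi}"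
proof -
  define F where "F = (\<lambda>u. complex_of_real (1 - (cmod a)^2) / (1 - a*u))"
  have nz: "a*u \<noteq> 1" if "cmod u \<le> 1" for u
  proof
    assume "a*u = 1"
    then have "cmod a * cmod u = 1" by (metis norm_mult norm_one)
    moreover have "cmod a * cmod u \<le> cmod a * 1" using that by (intro mult_left_mono) auto
    ultimately have "1 \<le> cmod a" by simp
    with a show False by simp
  qed
  have nz2: "a*u \<noteq> 1" if "cmod u < 1" for u using nz that by simp
  have contf: "continuous_on (cball 0 1) F" unfolding F_def
    by (intro continuous_intros) (use nz in auto)
  have holf: "F holomorphic_on (ball 0 1)" unfolding F_def
    by (intro holomorphic_intros) (use nz2 in auto)
  have "((\<lambda>u. F u/(u - cnj a)) has_contour_integral (2 * of_real pi * \<i> * F (cnj a))) (circlepath 0 1)"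
    by (rule Cauchy_integral_circlepath[OF contf holf]) (simp add: a)
  moreover have "F (cnj a) = 1"
  proof -
    have e: "a * cnj a = complex_of_real ((cmod a)^2)" by (metis complex_norm_square)
    have lt: "(cmod a)^2 < 1" using a by (simp add: power_less_one_iff abs_square_less_1)
    have e2: "1 - a * cnj a = complex_of_real (1 - (cmod a)^2)" by (simp only: e of_real_diff of_real_1)
    have c0: "complex_of_real (1 - (cmod a)^2) \<noteq> 0" using lt by (simp only: of_real_eq_0_iff)
    show ?thesis unfolding F_def e2 by (rule divide_self[OF c0])
  qed
  ultimately have H: "((\<lambda>t. F (0 + 1 * cis t)/((0 + 1*cis t) - cnj a) * 1 * \<i> * cis t) has_integral (2 * of_real pi * \<i>)) {0..2*pi}"
    unfolding circlepath_def by (subst (asm) has_contour_integral_part_circlepath_iff) auto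
  have G: "F (0 + 1 * cis t)/((0 + 1*cis t) - cnj a) * 1 * \<i> * cis t
      = \<i> * complex_of_real ((1 - (cmod a)^2) / (cmod (1 - a * cis t))^2)" for t
  proof -
    define z where "z = cis t"
    have z1: "z * cnj z = 1" unfolding z_def by (simp add: cis_cnj cis_mult)
    have e1: "complex_of_real ((cmod (1-a*z))^2) = (1-a*z) * cnj (1-a*z)"
      by (rule complex_norm_square)
    have e3: "z - cnj a = z * cnj (1 - a*z)" using z1 by (simp add: algebra_simps)
    have n1: "1 - a*z \<noteq> 0" using nz[of z] by (simp add: z_def)
    have n2: "cnj (1 - a*z) \<noteq> 0" using n1 by (metis complex_cnj_zero_iff)
    have n3: "z \<noteq> 0" by (simp add: z_def)
    define C where "C = complex_of_real (1 - (cmod a)^2)"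
    have "F (0 + 1 * z)/((0 + 1*z) - cnj a) * 1 * \<i> * z = F z/(z - cnj a) * 1 * \<i> * z" by simp
    also have "\<dots> = C/(1-a*z)/(z*cnj(1-a*z)) * 1 * \<i> * z" by (simp only: F_def e3 C_def)
    also have "\<dots> = \<i> * (C/((1-a*z)*cnj(1-a*z)))" by (rule alg[OF n1 n2 n3])
    also have "\<dots> = \<i> * complex_of_real ((1 - (cmod a)^2) / (cmod (1 - a * z))^2)"
      by (simp only: of_real_divide e1 C_def)
    finally show ?thesis unfolding z_def .
  qed
  from H have "((\<lambda>t. \<i> * complex_of_real ((1 - (cmod a)^2) / (cmod (1 - a * cis t))^2)) has_integral (2 * of_real pi * \<i>)) {0..2*pi}"
    by (simp only: G)
  then have "((\<lambda>t. complex_of_real ((1 - (cmod a)^2) / (cmod (1 - a * cis t))^2)) has_integral (2 * of_real pi * \<i>) / \<i>) {0..2*pi}"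
    by (subst (asm) has_integral_mult_right_iff) auto
  from has_integral_Re[OF this] show ?thesis by simp
qed

lemma sets_arc: "sets arc_measure = sets borel" by (simp add: arc_measure_def)

lemma meas_arc: "f \<in> borel_measurable borel \<Longrightarrow> f \<in> borel_measurable arc_measure"
  using measurable_cong_sets[OF sets_arc refl] by blast

lemma poisson_arc:
  fixes a :: complex assumes a: "cmod a < 1"
  shows "(\<integral>\<^sup>+z. ennreal ((1 - (cmod a)^2) / (cmod (1 - a * z))^2) \<partial>arc_measure) = ennreal (2*pi)"
proof -
  have cm: "cis \<in> measurable (restrict_space lborel {0..<2*pi}) borel"
    by (intro measurable_restrict_space1) (simp add: borel_measurable_continuous_onI continuous_on_cis)
  have "(\<integral>\<^sup>+z. ennreal ((1 - (cmod a)^2) / (cmod (1 - a * z))^2) \<partial>arc_measure)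
     = (\<integral>\<^sup>+t. ennreal ((1 - (cmod a)^2) / (cmod (1 - a * cis t))^2) \<partial>restrict_space lborel {0..<2*pi})"
    unfolding arc_measure_def by (subst nn_integral_distr[OF cm]) auto
  also have "\<dots> = (\<integral>\<^sup>+t. ennreal ((1 - (cmod a)^2) / (cmod (1 - a * cis t))^2) * indicator {0..<2*pi} t \<partial>lborel)"
    by (subst nn_integral_restrict_space) auto
  also have "\<dots> = ennreal (2*pi)"
  proof (rule nn_integral_has_integral_lebesgue')
    have "(cmod a)^2 < 1" using a by (simp add: power_less_one_iff abs_square_less_1)
    then show "0 \<le> (1 - (cmod a)^2) / (cmod (1 - a * cis t))^2" for t by simp
    have N1: "negligible {x \<in> {0..2*pi} - {0..<2*pi}. (1 - (cmod a)^2) / (cmod (1 - a * cis x))^2 \<noteq> 0}"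
      by (rule negligible_subset[OF negligible_sing[of "2*pi"]]) auto
    have N2: "negligible {x \<in> {0..<2*pi} - {0..2*pi}. (1 - (cmod a)^2) / (cmod (1 - a * cis x))^2 \<noteq> 0}"
      by (rule negligible_subset[OF negligible_empty]) auto
    show "((\<lambda>t. (1 - (cmod a)^2) / (cmod (1 - a * cis t))^2) has_integral 2*pi) {0..<2*pi}"
      using has_integral_spike_set_eq[OF N2 N1] poisson_hk[OF a] by simp
  qed
  finally show ?thesis .
qed

lemma marg1:
  assumes x: "cmod x = 1" and p: "cmod \<psi> < 1"
  shows "(\<integral>\<^sup>+y. ennreal (bc_density \<psi> x y) \<partial>arc_measure) = ennreal (1/(2*pi))"
proof -
  define a where "a = \<psi> * cnj x"
  have ca: "cmod a = cmod \<psi>" using x by (simp add: a_def norm_mult)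
  have cc1: "cmod (1 - \<psi> * y * cnj x) = cmod (1 - a * y)" for y by (simp add: a_def mult_ac)
  have "(\<integral>\<^sup>+y. ennreal (bc_density \<psi> x y) \<partial>arc_measure)
     = (\<integral>\<^sup>+y. ennreal (1/(4*pi^2)) * ennreal ((1 - (cmod a)^2) / (cmod (1 - a * y))^2) \<partial>arc_measure)"
    using cc1 by (intro nn_integral_cong) (unfold bc_density_def cc1, simp add: ca ennreal_mult'[symmetric] mult_ac)
  also have "\<dots> = ennreal (1/(4*pi^2)) * ennreal (2*pi)"
    by (subst nn_integral_cmult) (use poisson_arc[of a] p ca in \<open>auto intro!: meas_arc\<close>)
  also have "\<dots> = ennreal (1/(2*pi))"
    by (simp add: ennreal_mult'[symmetric] power2_eq_square)
  finally show ?thesis .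
qed

lemma marg2:
  assumes y: "cmod y = 1" and p: "cmod \<psi> < 1"
  shows "(\<integral>\<^sup>+x. ennreal (bc_density \<psi> x y) \<partial>arc_measure) = ennreal (1/(2*pi))"
proof -
  define a where "a = cnj \<psi> * cnj y"
  have ca: "cmod a = cmod \<psi>" using y by (simp add: a_def norm_mult)
  have cc: "cmod (1 - \<psi> * y * cnj x) = cmod (1 - a * x)" for x
  proof -
    have "1 - a * x = cnj (1 - \<psi> * y * cnj x)" by (simp add: a_def)
    then show ?thesis by (metis complex_mod_cnj)
  qed
  have "(\<integral>\<^sup>+x. ennreal (bc_density \<psi> x y) \<partial>arc_measure)
     = (\<integral>\<^sup>+x. ennreal (1/(4*pi^2)) * ennreal ((1 - (cmod a)^2) / (cmod (1 - a * x))^2) \<partial>arc_measure)"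
    by (intro nn_integral_cong) (unfold bc_density_def cc, simp add: ca ennreal_mult'[symmetric] mult_ac)
  also have "\<dots> = ennreal (1/(4*pi^2)) * ennreal (2*pi)"
    by (subst nn_integral_cmult) (use poisson_arc[of a] p ca in \<open>auto intro!: meas_arc\<close>)
  also have "\<dots> = ennreal (1/(2*pi))"
    by (simp add: ennreal_mult'[symmetric] power2_eq_square)
  finally show ?thesis .
qed

lemma cm: "cis \<in> measurable (restrict_space lborel {0..<2*pi}) borel"
  by (intro measurable_restrict_space1) (simp add: borel_measurable_continuous_onI continuous_on_cis)

lemma arc_space: "space arc_measure = UNIV" by (simp add: arc_measure_def)

lemma arc_total: "emeasure arc_measure UNIV = ennreal (2*pi)"
proof -
  have "emeasure arc_measure UNIV = emeasure (restrict_space lborel {0..<2*pi}) (cis -` UNIV \<inter> space (restrict_space lborel {0..<2*pi}))"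
    unfolding arc_measure_def by (rule emeasure_distr[OF cm]) simp
  also have "\<dots> = emeasure (restrict_space lborel {0..<2*pi}) {0..<2*pi}"
    by (simp add: space_restrict_space)
  also have "\<dots> = emeasure lborel {0..<2*pi}"
    by (rule emeasure_restrict_space) auto
  also have "\<dots> = ennreal (2*pi)" by simp
  finally show ?thesis .
qed

lemma arc_finite: "finite_measure arc_measure"
  by (rule finite_measureI) (simp add: arc_total arc_space)

lemma arc_sf: "sigma_finite_measure arc_measure"
proof -
  interpret finite_measure arc_measure by (rule arc_finite)
  show ?thesis ..
qed

lemma cis_pre_countable: "countable (cis -` {z})"
proof (cases "cis -` {z} = {}")
  case True then show ?thesis by simp
next
  case False
  then obtain t0 where t0: "cis t0 = z" by auto
  have "cis -` {z} \<subseteq> range (\<lambda>n::int. t0 + 2 * pi * of_int n)"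
  proof
    fix t assume "t \<in> cis -` {z}"
    then have "exp (\<i> * complex_of_real t) = exp (\<i> * complex_of_real t0)"
      using t0 by (simp add: cis_conv_exp)
    then obtain n :: int where "\<i> * complex_of_real t = \<i> * complex_of_real t0 + (of_int (2 * n) * pi) * \<i>"
      by (auto simp: exp_eq)
    then have "Im (\<i> * complex_of_real t) = Im (\<i> * complex_of_real t0 + (of_int (2 * n) * pi) * \<i>)" by simp
    then have "t = t0 + 2 * pi * of_int n" by simp
    then show "t \<in> range (\<lambda>n::int. t0 + 2 * pi * of_int n)" by auto
  qed
  then show ?thesis by (rule countable_subset) simp
qed

lemma arc_finite_null: assumes "finite A" shows "emeasure arc_measure A = 0"
proof -
  have As: "A \<in> sets borel" using assms by (simp add: borel_closed finite_imp_closed)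
  have "emeasure arc_measure A = emeasure (restrict_space lborel {0..<2*pi}) (cis -` A \<inter> space (restrict_space lborel {0..<2*pi}))"
    unfolding arc_measure_def by (rule emeasure_distr[OF cm]) (simp add: As)
  also have "\<dots> = emeasure lborel (cis -` A \<inter> {0..<2*pi})"
    by (simp add: space_restrict_space, rule emeasure_restrict_space) auto
  also have "\<dots> = 0"
  proof (rule emeasure_lborel_countable)
    have "countable (\<Union>z\<in>A. cis -` {z})" using assms by (intro countable_UN) (auto simp: cis_pre_countable countable_finite)
    moreover have "cis -` A \<inter> {0..<2*pi} \<subseteq> (\<Union>z\<in>A. cis -` {z})" by auto
    ultimately show "countable (cis -` A \<inter> {0..<2*pi})" by (rule countable_subset[rotated])
  qed
  finally show ?thesis .
qed

lemma AEc: "AE x in arc_measure. cmod x = 1"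
  unfolding arc_measure_def by (subst AE_distr_iff[OF cm]) auto

lemma bc_nonneg: "cmod \<psi> < 1 \<Longrightarrow> 0 \<le> bc_density \<psi> x y"
proof -
  assume "cmod \<psi> < 1"
  then have "(cmod \<psi>)^2 \<le> 1" by (simp add: power_le_one)
  then show ?thesis unfolding bc_density_def by simp
qed

lemma slice_finite:
  assumes p: "cmod \<psi> < 1" and nz: "\<psi> \<noteq> 0"
  shows "finite {y. cmod x = 1 \<and> cmod y = 1 \<and> bc_density \<psi> x y = 1/(4*pi^2)}"
proof -
  define r where "r = cmod \<psi>"
  define s where "s = sqrt (r^2 - r^4)"
  have sub: "{y. cmod x = 1 \<and> cmod y = 1 \<and> bc_density \<psi> x y = 1/(4*pi^2)}
      \<subseteq> (\<lambda>w. w*x/\<psi>) ` {Complex (r^2) s, Complex (r^2) (-s)}"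
  proof
    fix y assume "y \<in> {y. cmod x = 1 \<and> cmod y = 1 \<and> bc_density \<psi> x y = 1/(4*pi^2)}"
    then have x1: "cmod x = 1" and y1: "cmod y = 1" and b: "bc_density \<psi> x y = 1/(4*pi^2)" by auto
    define w where "w = \<psi> * y * cnj x"
    have cw: "cmod w = r" using x1 y1 by (simp add: w_def r_def norm_mult)
    define D where "D = (cmod (1 - w))^2"
    have "(1/(4*pi^2)) * (1 - r^2) / D = 1/(4*pi^2)" using b by (simp add: bc_density_def D_def w_def r_def)
    then have "(1/(4*pi^2)) * ((1 - r^2) / D) = (1/(4*pi^2)) * 1"
      by (simp only: times_divide_eq_right mult_1_right)
    moreover have K: "1/(4*pi^2) \<noteq> (0::real)" by simp
    ultimately have b2: "(1 - r^2) / D = 1" by (simp only: mult_left_cancel[OF K])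
    then have e1: "1 - r^2 = D" by (simp add: divide_eq_1_iff)
    have dw: "D = (1 - Re w)^2 + (Im w)^2" unfolding D_def by (simp add: cmod_power2)
    have rw: "r^2 = (Re w)^2 + (Im w)^2" using cw by (metis cmod_power2)
    have re: "Re w = r^2" using e1 dw rw by (simp add: power2_eq_square algebra_simps)
    have im2: "(Im w)^2 = r^2 - r^4" using rw re by (simp add: power2_eq_square power4_eq_xxxx algebra_simps)
    have "r^2 - r^4 \<ge> 0" using im2 by (metis zero_le_power2)
    then have "s^2 = (Im w)^2" using im2 by (simp add: s_def)
    then have "Im w = s \<or> Im w = - s" by (metis power2_eq_iff)
    then have wm: "w \<in> {Complex (r^2) s, Complex (r^2) (-s)}" using re by (auto simp: complex_eq_iff)
    have "cnj x * x = 1" using x1 by (metis complex_norm_square mult.commute of_real_1 power_one)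
    then have "w * x / \<psi> = y" using nz by (simp add: w_def field_simps)
    then show "y \<in> (\<lambda>w. w*x/\<psi>) ` {Complex (r^2) s, Complex (r^2) (-s)}" using wm by force
  qed
  show ?thesis by (rule finite_subset[OF sub]) simp
qed

lemma no_const:
  assumes p: "cmod \<psi> < 1" and nz: "\<psi> \<noteq> 0"
  and ae: "AE p in arc_measure \<Otimes>\<^sub>M arc_measure. ennreal (bc_density \<psi> (fst p) (snd p)) = ennreal (1/(2*pi)) * ennreal (1/(2*pi))"
  shows False
proof -
  interpret pair_sigma_finite arc_measure arc_measure
    unfolding pair_sigma_finite_def using arc_sf by simp
  define G where "G = {p \<in> space (arc_measure \<Otimes>\<^sub>M arc_measure). cmod (fst p) = 1 \<and> cmod (snd p) = 1 \<and> bc_density \<psi> (fst p) (snd p) = 1/(4*pi^2)}"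
  have SSb: "sets (arc_measure \<Otimes>\<^sub>M arc_measure) = sets (borel :: (complex \<times> complex) measure)"
  proof -
    have "sets (arc_measure \<Otimes>\<^sub>M arc_measure) = sets (borel \<Otimes>\<^sub>M borel :: (complex \<times> complex) measure)"
      by (rule sets_pair_measure_cong) (simp_all add: sets_arc)
    then show ?thesis by (metis borel_prod)
  qed
  have SSsp: "space (arc_measure \<Otimes>\<^sub>M arc_measure) = UNIV" by (simp add: space_pair_measure arc_space)
  have t1: "(\<lambda>p::complex\<times>complex. bc_density \<psi> (fst p) (snd p)) \<in> borel_measurable borel"
    unfolding bc_density_def
    by (intro borel_measurable_divide borel_measurable_times borel_measurable_const borel_measurable_continuous_onI continuous_intros)
  have m: "(\<lambda>p::complex\<times>complex. cmod (fst p)) \<in> borel_measurable borel" "(\<lambda>p::complex\<times>complex. cmod (snd p)) \<in> borel_measurable borel"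
    by (intro borel_measurable_continuous_onI continuous_intros)+
  have b1: "{p::complex\<times>complex. cmod (fst p) = 1 \<and> cmod (snd p) = 1 \<and> bc_density \<psi> (fst p) (snd p) = 1/(4*pi^2)} \<in> sets borel"
    using t1 m by measurable
  have b2: "{p::complex\<times>complex. cmod (fst p) = 1 \<and> cmod (snd p) = 1} \<in> sets borel"
    using m by measurable
  have Gm: "G \<in> sets (arc_measure \<Otimes>\<^sub>M arc_measure)" unfolding G_def SSb SSsp using b1 by simp
  have AE1: "AE p in arc_measure \<Otimes>\<^sub>M arc_measure. cmod (fst p) = 1 \<and> cmod (snd p) = 1"
  proof (rule AE_pair_measure)
    show "{x \<in> space (arc_measure \<Otimes>\<^sub>M arc_measure). cmod (fst x) = 1 \<and> cmod (snd x) = 1} \<in> sets (arc_measure \<Otimes>\<^sub>M arc_measure)"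
      unfolding SSb SSsp using b2 by simp
    show "AE x in arc_measure. AE y in arc_measure. cmod (fst (x, y)) = 1 \<and> cmod (snd (x, y)) = 1"
      using AEc
    proof eventually_elim
      case (elim x) show ?case using AEc by eventually_elim (simp add: elim)
    qed
  qed
  have cc: "ennreal (1/(2*pi)) * ennreal (1/(2*pi)) = ennreal (1/(4*pi^2))"
    by (simp add: ennreal_mult'[symmetric] power2_eq_square)
  have AEG: "AE p in arc_measure \<Otimes>\<^sub>M arc_measure. p \<in> G"
    using ae AE1 AE_space
  proof eventually_elim
    case (elim p)
    then have "bc_density \<psi> (fst p) (snd p) = 1/(4*pi^2)"
      using bc_nonneg[OF p] by (simp add: cc ennreal_inj)
    then show ?case using elim by (simp add: G_def)
  qed
  have G0: "emeasure (arc_measure \<Otimes>\<^sub>M arc_measure) G = 0"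
  proof -
    have "emeasure (arc_measure \<Otimes>\<^sub>M arc_measure) G = (\<integral>\<^sup>+x. emeasure arc_measure (Pair x -` G) \<partial>arc_measure)"
      by (rule sigma_finite_measure.emeasure_pair_measure_alt[OF arc_sf Gm])
    also have "\<dots> = (\<integral>\<^sup>+x. 0 \<partial>arc_measure)"
    proof (intro nn_integral_cong arc_finite_null)
      fix x
      have "Pair x -` G \<subseteq> {y. cmod x = 1 \<and> cmod y = 1 \<and> bc_density \<psi> x y = 1/(4*pi^2)}"
        by (auto simp: G_def)
      then show "finite (Pair x -` G)" by (rule finite_subset) (rule slice_finite[OF p nz])
    qed
    finally show ?thesis by simp
  qed
  have "G \<in> null_sets (arc_measure \<Otimes>\<^sub>M arc_measure)" using Gm G0 by (simp add: null_sets_def)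
  then have "AE p in arc_measure \<Otimes>\<^sub>M arc_measure. p \<notin> G" by (simp add: AE_iff_null_sets[OF Gm])
  with AEG have "AE p in arc_measure \<Otimes>\<^sub>M arc_measure. False" by eventually_elim simp
  then have "emeasure (arc_measure \<Otimes>\<^sub>M arc_measure) (space (arc_measure \<Otimes>\<^sub>M arc_measure)) = 0"
    by (metis ae_filter_eq_bot_iff eventually_False)
  moreover have "emeasure (arc_measure \<Otimes>\<^sub>M arc_measure) (space (arc_measure \<Otimes>\<^sub>M arc_measure)) = ennreal (2*pi) * ennreal (2*pi)"
  proof -
    have "emeasure (arc_measure \<Otimes>\<^sub>M arc_measure) (UNIV \<times> UNIV) = emeasure arc_measure UNIV * emeasure arc_measure UNIV"
      by (rule sigma_finite_measure.emeasure_pair_measure_Times[OF arc_sf]) (auto simp: sets_arc)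
    then show ?thesis by (simp add: SSsp arc_total)
  qed
  ultimately show False by (simp add: ennreal_mult'[symmetric])
qed

lemma (in prob_space) indep_var_cong':
  assumes "indep_var S X T Y" "\<And>w. w \<in> space M \<Longrightarrow> X w = X' w" "\<And>w. w \<in> space M \<Longrightarrow> Y w = Y' w"
  shows "indep_var S X' T Y'"
proof -
  have XX: "X \<in> measurable M S \<longleftrightarrow> X' \<in> measurable M S" by (rule measurable_cong) (rule assms(2))
  have YY: "Y \<in> measurable M T \<longleftrightarrow> Y' \<in> measurable M T" by (rule measurable_cong) (rule assms(3))
  have D1: "distr M S X = distr M S X'" by (rule distr_cong) (auto simp: assms(2))
  have D2: "distr M T Y = distr M T Y'" by (rule distr_cong) (auto simp: assms(3))
  have D3: "distr M (S \<Otimes>\<^sub>M T) (\<lambda>x. (X x, Y x)) = distr M (S \<Otimes>\<^sub>M T) (\<lambda>x. (X' x, Y' x))"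
    by (rule distr_cong) (auto simp: assms(2,3))
  show ?thesis using assms(1) unfolding indep_var_distribution_eq XX YY D1 D2 D3 .
qed

lemma circle_compact: "compact unit_circle"
proof -
  have "unit_circle = sphere 0 1" by (auto simp: unit_circle_def)
  then show ?thesis by (metis compact_sphere)
qed

lemma ext_meas:
  fixes g :: "complex \<Rightarrow> 'b::euclidean_space"
  assumes "g differentiable_on unit_circle"
  shows "(\<lambda>z. if z \<in> unit_circle then g z else 0) \<in> arc_measure \<rightarrow>\<^sub>M borel"
proof -
  have c: "continuous_on unit_circle g" using assms by (rule differentiable_imp_continuous_on)
  have "(\<lambda>z. if z \<in> unit_circle then g z else 0) \<in> borel_measurable borel"
    by (rule borel_measurable_continuous_on_if)
       (use c circle_compact in \<open>auto intro: borel_closed compact_imp_closed continuous_on_const\<close>)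
  then show ?thesis by (rule meas_arc)
qed

lemma inv_meas:
  fixes g :: "complex \<Rightarrow> 'b::euclidean_space"
  assumes "g differentiable_on unit_circle" "inj_on g unit_circle"
  obtains h where "h \<in> borel \<rightarrow>\<^sub>M arc_measure" "\<And>z. z \<in> unit_circle \<Longrightarrow> h (g z) = z"
proof -
  have c: "continuous_on unit_circle g" using assms(1) by (rule differentiable_imp_continuous_on)
  define k where "k = inv_into unit_circle g"
  have kg: "\<And>z. z \<in> unit_circle \<Longrightarrow> k (g z) = z" unfolding k_def using assms(2) by simp
  have ck: "continuous_on (g ` unit_circle) k"
    by (rule continuous_on_inv[OF c circle_compact]) (use kg in auto)
  have cpt: "compact (g ` unit_circle)" by (rule compact_continuous_image[OF c circle_compact])
  define h where "h = (\<lambda>y. if y \<in> g ` unit_circle then k y else 0)"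
  have "h \<in> borel_measurable borel" unfolding h_def
    by (rule borel_measurable_continuous_on_if)
       (use ck cpt in \<open>auto intro: borel_closed compact_imp_closed continuous_on_const\<close>)
  then have "h \<in> borel \<rightarrow>\<^sub>M arc_measure" using measurable_cong_sets[OF refl sets_arc] by blast
  moreover have "\<And>z. z \<in> unit_circle \<Longrightarrow> h (g z) = z" unfolding h_def using kg by auto
  ultimately show ?thesis using that by blast
qed

theorem theorem5:
  fixes M :: "'a measure"
    and ZU ZV :: "'a \<Rightarrow> complex"
    and \<psi> :: complex
    and g1 :: "complex \<Rightarrow> 'b::euclidean_space"
    and g2 :: "complex \<Rightarrow> 'b"
  assumes "prob_space M"
    and "cmod \<psi> < 1"
    and "\<forall>\<omega>\<in>space M. ZU \<omega> \<in> unit_circle \<and> ZV \<omega> \<in> unit_circle"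
    and "distributed M (arc_measure \<Otimes>\<^sub>M arc_measure) (\<lambda>\<omega>. (ZU \<omega>, ZV \<omega>))
           (\<lambda>(zu, zv). ennreal (bc_density \<psi> zu zv))"
    and "inj_on g1 unit_circle" and "g1 differentiable_on unit_circle"
    and "inj_on g2 unit_circle" and "g2 differentiable_on unit_circle"
  shows "prob_space.indep_var M borel (\<lambda>\<omega>. g1 (ZU \<omega>)) borel (\<lambda>\<omega>. g2 (ZV \<omega>))
         \<longleftrightarrow> \<psi> = 0"
proof -
  interpret prob_space M by fact
  note Pxy = assms(4)
  have sf: "sigma_finite_measure arc_measure" by (rule arc_sf)
  have XYm: "(\<lambda>\<omega>. (ZU \<omega>, ZV \<omega>)) \<in> M \<rightarrow>\<^sub>M arc_measure \<Otimes>\<^sub>M arc_measure"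
    using Pxy by (rule distributed_measurable)
  have Xm: "ZU \<in> M \<rightarrow>\<^sub>M arc_measure" using measurable_compose[OF XYm measurable_fst] by simp
  have Ym: "ZV \<in> M \<rightarrow>\<^sub>M arc_measure" using measurable_compose[OF XYm measurable_snd] by simp
  have PX: "distributed M arc_measure ZU (\<lambda>x. \<integral>\<^sup>+y. ennreal (bc_density \<psi> x y) \<partial>arc_measure)"
    using distr_marginal1[OF sf sf Pxy] by simp
  have PY: "distributed M arc_measure ZV (\<lambda>y. \<integral>\<^sup>+x. ennreal (bc_density \<psi> x y) \<partial>arc_measure)"
    using distr_marginal2[OF sf sf Pxy] by simp
  have PX': "distributed M arc_measure ZU (\<lambda>_. ennreal (1/(2*pi)))"
  proof (subst distributed_cong_density[symmetric])
    show "AE x in arc_measure. (\<integral>\<^sup>+y. ennreal (bc_density \<psi> x y) \<partial>arc_measure) = ennreal (1/(2*pi))"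
      using AEc by eventually_elim (simp add: marg1 assms(2))
    show "(\<lambda>x. \<integral>\<^sup>+y. ennreal (bc_density \<psi> x y) \<partial>arc_measure) \<in> borel_measurable arc_measure"
      using PX by (rule distributed_borel_measurable)
  qed (use PX in auto)
  have PY': "distributed M arc_measure ZV (\<lambda>_. ennreal (1/(2*pi)))"
  proof (subst distributed_cong_density[symmetric])
    show "AE y in arc_measure. (\<integral>\<^sup>+x. ennreal (bc_density \<psi> x y) \<partial>arc_measure) = ennreal (1/(2*pi))"
      using AEc by eventually_elim (simp add: marg2 assms(2))
    show "(\<lambda>y. \<integral>\<^sup>+x. ennreal (bc_density \<psi> x y) \<partial>arc_measure) \<in> borel_measurable arc_measure"
      using PY by (rule distributed_borel_measurable)
  qed (use PY in auto)
  show ?thesis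
  proof
    assume ind: "indep_var borel (\<lambda>\<omega>. g1 (ZU \<omega>)) borel (\<lambda>\<omega>. g2 (ZV \<omega>))"
    obtain h1 where h1: "h1 \<in> borel \<rightarrow>\<^sub>M arc_measure" "\<And>z. z \<in> unit_circle \<Longrightarrow> h1 (g1 z) = z"
      using inv_meas[OF assms(6) assms(5)] by blast
    obtain h2 where h2: "h2 \<in> borel \<rightarrow>\<^sub>M arc_measure" "\<And>z. z \<in> unit_circle \<Longrightarrow> h2 (g2 z) = z"
      using inv_meas[OF assms(8) assms(7)] by blast
    have "indep_var arc_measure (h1 \<circ> (\<lambda>\<omega>. g1 (ZU \<omega>))) arc_measure (h2 \<circ> (\<lambda>\<omega>. g2 (ZV \<omega>)))"
      by (rule indep_var_compose[OF ind h1(1) h2(1)])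
    then have ind2: "indep_var arc_measure ZU arc_measure ZV"
      by (rule indep_var_cong') (use assms(3) h1(2) h2(2) in auto)
    have "distributed M (arc_measure \<Otimes>\<^sub>M arc_measure) (\<lambda>\<omega>. (ZU \<omega>, ZV \<omega>))
        (\<lambda>(x, y). ennreal (1/(2*pi)) * ennreal (1/(2*pi)))"
      using distributed_joint_indep[OF sf sf PX' PY' ind2] by simp
    from distributed_unique[OF Pxy this]
    have "AE p in arc_measure \<Otimes>\<^sub>M arc_measure. ennreal (bc_density \<psi> (fst p) (snd p)) = ennreal (1/(2*pi)) * ennreal (1/(2*pi))"
      by (simp add: case_prod_beta)
    then show "\<psi> = 0" using no_const[OF assms(2)] by blast
  next
    assume z: "\<psi> = 0"
    let ?c = "ennreal (1/(2*pi))"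
    interpret DY: prob_space "density arc_measure (\<lambda>_. ?c)"
      unfolding distributed_distr_eq_density[OF PY', symmetric] by (rule prob_space_distr) (rule Ym)
    have sfd: "sigma_finite_measure (density arc_measure (\<lambda>_. ?c))" ..
    have "distr M arc_measure ZU \<Otimes>\<^sub>M distr M arc_measure ZV
       = density arc_measure (\<lambda>_. ?c) \<Otimes>\<^sub>M density arc_measure (\<lambda>_. ?c)"
      by (simp add: distributed_distr_eq_density[OF PX'] distributed_distr_eq_density[OF PY'])
    also have "\<dots> = density (arc_measure \<Otimes>\<^sub>M arc_measure) (\<lambda>(x,y). ?c * ?c)"
      by (rule pair_measure_density[OF _ _ sf sfd]) auto
    also have "\<dots> = density (arc_measure \<Otimes>\<^sub>M arc_measure) (\<lambda>(zu, zv). ennreal (bc_density \<psi> zu zv))"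
    proof -
      have "?c * ?c = ennreal (1/(4*pi^2))" by (simp add: ennreal_mult'[symmetric] power2_eq_square)
      moreover have "bc_density \<psi> zu zv = 1/(4*pi^2)" for zu zv by (simp add: z bc_density_def)
      ultimately show ?thesis by simp
    qed
    also have "\<dots> = distr M (arc_measure \<Otimes>\<^sub>M arc_measure) (\<lambda>\<omega>. (ZU \<omega>, ZV \<omega>))"
      by (simp add: distributed_distr_eq_density[OF Pxy])
    finally have "indep_var arc_measure ZU arc_measure ZV"
      using Xm Ym by (simp add: indep_var_distribution_eq)
    then have "indep_var borel ((\<lambda>z. if z \<in> unit_circle then g1 z else 0) \<circ> ZU) borel ((\<lambda>z. if z \<in> unit_circle then g2 z else 0) \<circ> ZV)"
      by (rule indep_var_compose) (rule ext_meas, fact)+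
    then show "indep_var borel (\<lambda>\<omega>. g1 (ZU \<omega>)) borel (\<lambda>\<omega>. g2 (ZV \<omega>))"
      by (rule indep_var_cong') (use assms(3) in auto)
  qed
qed

end
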